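(* Let $\mathscr{X}$ be a complex Banach space and $\mathcal{A}\subseteq\mathcal{B}(\mathscr{X})$ a reflexive algebra with commutant $\mathcal{A}'$. Then $\mathrm{Grp}(\mathcal{A})\mathrm{Grp}(\mathcal{A}')\subseteq\mathrm{Col}(\mathcal{A})\subseteq\mathrm{Col}(\mathcal{A}')$. Moreover, if both $\mathcal{A}$ and $\mathcal{A}'$ are reflexive, then $\mathrm{Grp}(\mathcal{A})\mathrm{Grp}(\mathcal{A}')$ is a normal subgroup of $\mathrm{Col}(\mathcal{A})$.
   Context: $\mathcal{A}'=\{T\in\mathcal{B}(\mathscr{X}):TA=AT\ \forall A\in\mathcal{A}\}$. A subalgebra $\mathcal{A}$ is reflexive if $\mathrm{Alg}\,\mathrm{Lat}(\mathcal{A})=\mathcal{A}$, where $\mathrm{Lat}(\mathcal{T})$ is the set of closed subspaces invariant under all operators of $\mathcal{T}$ and $\mathrm{Alg}(\mathfrak{F})$ is the set of operators leaving every subspace of $\mathfrak{F}$ invariant. For a unital algebra $\mathcal{B}$, $\mathrm{Grp}(\mathcal{B})$ is the group of invertible $S\in\mathcal{B}$ with $S^{-1}\in\mathcal{B}$, and $\mathrm{Grp}(\mathcal{A})\mathrm{Grp}(\mathcal{A}')=\{AB:A\in\mathrm{Grp}(\mathcal{A}),B\in\mathrm{Grp}(\mathcal{A}')\}$. For a set $\mathcal{T}$ of operators, $\mathrm{Col}(\mathcal{T})$ is the group of invertible $S\in\mathcal{B}(\mathscr{X})$ such that for every closed subspace $\mathscr{M}$: $\mathscr{M}\in\mathrm{Lat}(\mathcal{T})$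 iff $S\mathscr{M}\in\mathrm{Lat}(\mathcal{T})$. *)

theory Defs
  imports "HOL-Analysis.Analysis" "HOL-Algebra.Coset"
begin

text \<open>HOL has no class of complex vector spaces; we introduce it as a
real normed vector space with a compatible complex scalar multiplication.\<close>

class complex_vector = real_vector +
  fixes scaleC :: "complex \<Rightarrow> 'a \<Rightarrow> 'a" (infixr \<open>*\<^sub>C\<close> 75)
  assumes scaleC_add_right: "a *\<^sub>C (x + y) = a *\<^sub>C x + a *\<^sub>C y"
    and scaleC_add_left: "(a + b) *\<^sub>C x = a *\<^sub>C x + b *\<^sub>C x"
    and scaleC_scaleC: "a *\<^sub>C (b *\<^sub>C x) = (a * b) *\<^sub>C x"
    and scaleC_one: "1 *\<^sub>C x = x"
    and scaleR_scaleC: "scaleR r x = (complex_of_real r) *\<^sub>C x"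

class complex_normed_vector = complex_vector + real_normed_vector +
  assumes norm_scaleC: "norm (a *\<^sub>C x) = cmod a * norm x"

class complex_banach = complex_normed_vector + banach

definition bounded_clinear :: "('a::complex_normed_vector \<Rightarrow> 'b::complex_normed_vector) \<Rightarrow> bool" where
  "bounded_clinear f \<longleftrightarrow> bounded_linear f \<and> (\<forall>c x. f (c *\<^sub>C x) = c *\<^sub>C f x)"

definition BX :: "('a::complex_normed_vector \<Rightarrow> 'a) set" where
  "BX = {T. bounded_clinear T}"

definition closed_csubspace :: "'a::complex_normed_vector set \<Rightarrow> bool" where
  "closed_csubspace M \<longleftrightarrow> closed M \<and> 0 \<in> M \<and> (\<forall>x\<in>M. \<forall>y\<in>M. x + y \<in> M)
     \<and> (\<forall>c. \<forall>x\<in>M. c *\<^sub>C x \<in> M)"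

definition Lat :: "('a::complex_normed_vector \<Rightarrow> 'a) set \<Rightarrow> 'a set set" where
  "Lat \<T> = {M. closed_csubspace M \<and> (\<forall>T\<in>\<T>. T ` M \<subseteq> M)}"

definition Alg :: "'a::complex_normed_vector set set \<Rightarrow> ('a \<Rightarrow> 'a) set" where
  "Alg \<F> = {T \<in> BX. \<forall>M\<in>\<F>. T ` M \<subseteq> M}"

definition subalgebra :: "('a::complex_normed_vector \<Rightarrow> 'a) set \<Rightarrow> bool" where
  "subalgebra \<A> \<longleftrightarrow> \<A> \<subseteq> BX \<and> (\<lambda>x. 0) \<in> \<A>
     \<and> (\<forall>S\<in>\<A>. \<forall>T\<in>\<A>. (\<lambda>x. S x + T x) \<in> \<A> \<and> S \<circ> T \<in> \<A>)
     \<and> (\<forall>c. \<forall>T\<in>\<A>. (\<lambda>x. c *\<^sub>C T x) \<in> \<A>)"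

definition reflexive_alg :: "('a::complex_normed_vector \<Rightarrow> 'a) set \<Rightarrow> bool" where
  "reflexive_alg \<A> \<longleftrightarrow> Alg (Lat \<A>) = \<A>"

definition commutant :: "('a::complex_normed_vector \<Rightarrow> 'a) set \<Rightarrow> ('a \<Rightarrow> 'a) set" where
  "commutant \<A> = {T \<in> BX. \<forall>A\<in>\<A>. T \<circ> A = A \<circ> T}"

definition Grp :: "('a \<Rightarrow> 'a) set \<Rightarrow> ('a \<Rightarrow> 'a) set" where
  "Grp \<B> = {S \<in> \<B>. bij S \<and> inv_into UNIV S \<in> \<B>}"

definition GrpProd :: "('a::complex_normed_vector \<Rightarrow> 'a) set \<Rightarrow> ('a \<Rightarrow> 'a) set" where
  "GrpProd \<A> = {A \<circ> B | A B. A \<in> Grp \<A> \<and> B \<in> Grp (commutant \<A>)}"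

definition Col :: "('a::complex_normed_vector \<Rightarrow> 'a) set \<Rightarrow> ('a \<Rightarrow> 'a) set" where
  "Col \<T> = {S \<in> Grp BX. \<forall>M. closed_csubspace M \<longrightarrow> (M \<in> Lat \<T> \<longleftrightarrow> S ` M \<in> Lat \<T>)}"

definition Col_group :: "('a::complex_normed_vector \<Rightarrow> 'a) set \<Rightarrow> ('a \<Rightarrow> 'a) monoid" where
  "Col_group \<T> = \<lparr>carrier = Col \<T>, mult = (\<circ>), one = id\<rparr>"

end

theory Submission
  imports Defs
begin

lemma bcl_comp: "bounded_clinear f \<Longrightarrow> bounded_clinear g \<Longrightarrow> bounded_clinear (f \<circ> g)"
  unfolding bounded_clinear_def using bounded_linear_compose[of f g] by (auto simp: o_def)

lemma bcl_id: "bounded_clinear id"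
  unfolding bounded_clinear_def using bounded_linear_ident by (simp add: id_def)

lemma Grp_inv: "S \<in> Grp C \<Longrightarrow> inv_into UNIV S \<in> Grp C"
  unfolding Grp_def by (auto simp: bij_imp_bij_inv inv_inv_eq)

lemma Grp_mono: "C \<subseteq> D \<Longrightarrow> Grp C \<subseteq> Grp D"
  unfolding Grp_def by auto

lemma Grp_comp:
  assumes "\<And>X Y. X \<in> C \<Longrightarrow> Y \<in> C \<Longrightarrow> X \<circ> Y \<in> C" "S \<in> Grp C" "T \<in> Grp C"
  shows "S \<circ> T \<in> Grp C"
  using assms unfolding Grp_def by (auto simp: bij_comp o_inv_distrib)

lemma Grp_BX_comp: "S \<in> Grp BX \<Longrightarrow> T \<in> Grp BX \<Longrightarrow> S \<circ> T \<in> Grp BX"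
  by (rule Grp_comp) (auto simp: BX_def bcl_comp)

lemma Grp_id: "id \<in> C \<Longrightarrow> id \<in> Grp C"
  unfolding Grp_def by (simp add: inv_id)

lemma grp_bij: "S \<in> Grp C \<Longrightarrow> bij S"
  unfolding Grp_def by auto

lemma grp_invs1: "S \<in> Grp C \<Longrightarrow> inv_into UNIV S (S x) = x"
  using grp_bij[of S C] by (simp add: bij_is_inj)
lemma grp_invs2: "S \<in> Grp C \<Longrightarrow> S (inv_into UNIV S x) = x"
  using grp_bij[of S C] by (simp add: bij_is_surj surj_f_inv_f)
lemmas grp_invs = grp_invs1 grp_invs2

lemma image_csub:
  fixes S :: "'a::complex_normed_vector \<Rightarrow> 'a"
  assumes S: "S \<in> Grp BX" and M: "closed_csubspace M"
  shows "closed_csubspace (S ` M)"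
proof -
  have bS: "bounded_clinear S" "bounded_clinear (inv_into UNIV S)" "bij S"
    using S unfolding Grp_def BX_def by auto
  have "S ` M = inv_into UNIV S -` M"
    using bij_vimage_eq_inv_image[of "inv_into UNIV S" M] bS by (simp add: bij_imp_bij_inv inv_inv_eq)
  moreover have "closed (inv_into UNIV S -` M)"
    using M bS(2) unfolding closed_csubspace_def bounded_clinear_def
    by (auto intro: closed_vimage linear_continuous_on)
  ultimately have c: "closed (S ` M)" by simp
  have l: "bounded_linear S" and sc: "\<And>c x. S (c *\<^sub>C x) = c *\<^sub>C S x"
    using bS(1) unfolding bounded_clinear_def by auto
  have z: "S 0 = 0" using l by (simp add: linear_simps)
  have a: "\<And>x y. S (x + y) = S x + S y" using l by (simp add: linear_simps)
  show ?thesis unfolding closed_csubspace_def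
  proof (intro conjI ballI allI c)
    show "0 \<in> S ` M" using M z unfolding closed_csubspace_def by (metis image_eqI)
  next
    fix x y assume "x \<in> S ` M" "y \<in> S ` M"
    then obtain u v where "u \<in> M" "v \<in> M" "x = S u" "y = S v" by auto
    then show "x + y \<in> S ` M" using M a unfolding closed_csubspace_def by (metis image_eqI)
  next
    fix c x assume "x \<in> S ` M"
    then obtain u where "u \<in> M" "x = S u" by auto
    then show "c *\<^sub>C x \<in> S ` M" using M sc unfolding closed_csubspace_def by (metis image_eqI)
  qed
qed

lemma col_intro:
  assumes G: "S \<in> Grp BX" and H: "\<And>M. M \<in> Lat T \<Longrightarrow> S ` M \<in> Lat T \<and> inv_into UNIV S ` M \<in> Lat T"
  shows "S \<in> Col T"
proof -
  have bk: "M \<in> Lat T" if "S ` M \<in> Lat T" for M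
  proof -
    have "inv_into UNIV S ` (S ` M) = M" by (simp add: image_image grp_invs1[OF G])
    then show ?thesis using H[OF that] by simp
  qed
  show ?thesis unfolding Col_def mem_Collect_eq
  proof (intro conjI allI impI iffI G)
    fix M assume "M \<in> Lat T" then show "S ` M \<in> Lat T" using H by simp
  next
    fix M assume "S ` M \<in> Lat T" then show "M \<in> Lat T" by (rule bk)
  qed
qed

lemma col_grp: "S \<in> Col T \<Longrightarrow> S \<in> Grp BX"
  unfolding Col_def by simp

lemma col_lat: "S \<in> Col T \<Longrightarrow> M \<in> Lat T \<Longrightarrow> S ` M \<in> Lat T"
proof -
  assume a: "S \<in> Col T" "M \<in> Lat T"
  then have "closed_csubspace M" unfolding Lat_def by simp
  then show ?thesis using a unfolding Col_def by blast
qed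

lemma col_inv:
  assumes S: "S \<in> Col T" shows "inv_into UNIV S \<in> Col T"
proof (rule col_intro)
  have G: "S \<in> Grp BX" using S by (rule col_grp)
  show "inv_into UNIV S \<in> Grp BX" using Grp_inv[OF G] .
  fix M assume M: "M \<in> Lat T"
  have e: "S ` (inv_into UNIV S ` M) = M" by (simp add: image_image grp_invs2[OF G])
  have c: "closed_csubspace (inv_into UNIV S ` M)"
    using image_csub[OF Grp_inv[OF G]] M unfolding Lat_def by simp
  have "inv_into UNIV S ` M \<in> Lat T"
    using S c M e unfolding Col_def by simp
  moreover have "inv_into UNIV (inv_into UNIV S) = S" using G grp_bij inv_inv_eq by blast
  ultimately show "inv_into UNIV S ` M \<in> Lat T \<and> inv_into UNIV (inv_into UNIV S) ` M \<in> Lat T"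
    using col_lat[OF S M] by simp
qed

abbreviation iv :: "('b \<Rightarrow> 'b) \<Rightarrow> 'b \<Rightarrow> 'b" where "iv f \<equiv> inv_into UNIV f"

lemma refl_id: "reflexive_alg \<A> \<Longrightarrow> id \<in> \<A>"
proof -
  assume r: "reflexive_alg \<A>"
  have "id \<in> Alg (Lat \<A>)" unfolding Alg_def BX_def using bcl_id by simp
  then show ?thesis using r unfolding reflexive_alg_def by simp
qed

lemma refl_BX: "reflexive_alg \<A> \<Longrightarrow> \<A> \<subseteq> BX"
proof -
  assume "reflexive_alg \<A>"
  then have "\<A> = Alg (Lat \<A>)" unfolding reflexive_alg_def by simp
  moreover have "Alg (Lat \<A>) \<subseteq> BX" unfolding Alg_def by (rule subsetI) simp
  ultimately show ?thesis by simp
qed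

lemma sub_comp: "subalgebra \<A> \<Longrightarrow> X \<in> \<A> \<Longrightarrow> Y \<in> \<A> \<Longrightarrow> X \<circ> Y \<in> \<A>"
  unfolding subalgebra_def by blast

lemma comm_BX: "commutant \<A> \<subseteq> BX"
  unfolding commutant_def by (rule subsetI) simp

lemma comm_eq: "C \<in> commutant \<A> \<Longrightarrow> T \<in> \<A> \<Longrightarrow> C \<circ> T = T \<circ> C"
  unfolding commutant_def by simp

lemma comm_pt: "C \<in> commutant \<A> \<Longrightarrow> T \<in> \<A> \<Longrightarrow> C (T x) = T (C x)"
proof -
  assume "C \<in> commutant \<A>" "T \<in> \<A>"
  then have "(C \<circ> T) x = (T \<circ> C) x" using comm_eq by metis
  then show ?thesis by simp
qed

lemma comm_intro: "C \<in> BX \<Longrightarrow> (\<And>T x. T \<in> \<A> \<Longrightarrow> C (T x) = T (C x)) \<Longrightarrow> C \<in> commutant \<A>"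
  unfolding commutant_def mem_Collect_eq by (simp add: fun_eq_iff)

lemma BX_comp: "X \<in> BX \<Longrightarrow> Y \<in> BX \<Longrightarrow> X \<circ> Y \<in> BX"
  by (simp add: BX_def bcl_comp)

lemma comm_comp: "X \<in> commutant \<A> \<Longrightarrow> Y \<in> commutant \<A> \<Longrightarrow> X \<circ> Y \<in> commutant \<A>"
proof -
  assume a: "X \<in> commutant \<A>" "Y \<in> commutant \<A>"
  have "X \<circ> Y \<in> BX" using a comm_BX BX_comp by blast
  then show ?thesis by (rule comm_intro) (simp add: comm_pt[OF a(1)] comm_pt[OF a(2)])
qed

lemma grp_mem: "S \<in> Grp C \<Longrightarrow> S \<in> C" "S \<in> Grp C \<Longrightarrow> iv S \<in> C"
  unfolding Grp_def by auto

lemma grp_ivv: "S \<in> Grp C \<Longrightarrow> iv (iv S) = S"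
  using grp_bij inv_inv_eq by blast

lemma col_conj:
  assumes r: "reflexive_alg \<A>" and S: "S \<in> Col \<A>" and T: "T \<in> \<A>"
  shows "S \<circ> T \<circ> iv S \<in> \<A>"
proof -
  have G: "S \<in> Grp BX" using S by (rule col_grp)
  have TA: "T \<in> Alg (Lat \<A>)" using T r unfolding reflexive_alg_def by simp
  have "S \<circ> T \<circ> iv S \<in> Alg (Lat \<A>)" unfolding Alg_def mem_Collect_eq
  proof (intro conjI ballI)
    show "S \<circ> T \<circ> iv S \<in> BX"
    proof -
      have "T \<in> BX" using T refl_BX[OF r] by (rule subsetD[rotated])
      then show ?thesis using BX_comp[OF BX_comp[OF grp_mem(1)[OF G]] grp_mem(2)[OF G]] by simp
    qed
  next
    fix N assume N: "N \<in> Lat \<A>"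
    have M: "iv S ` N \<in> Lat \<A>" using col_lat[OF col_inv[OF S] N] .
    have "T ` (iv S ` N) \<subseteq> iv S ` N" using M TA unfolding Alg_def by simp
    then have "S ` (T ` (iv S ` N)) \<subseteq> S ` (iv S ` N)" by (rule image_mono)
    also have "S ` (iv S ` N) = N" by (simp add: image_image grp_invs2[OF G])
    finally show "(S \<circ> T \<circ> iv S) ` N \<subseteq> N" by (simp add: image_comp)
  qed
  then show ?thesis using r unfolding reflexive_alg_def by simp
qed

lemma col_conj_comm:
  assumes r: "reflexive_alg \<A>" and S: "S \<in> Col \<A>" and C: "C \<in> commutant \<A>"
  shows "S \<circ> C \<circ> iv S \<in> commutant \<A>"
proof (rule comm_intro)
  have G: "S \<in> Grp BX" using S by (rule col_grp)
  show "S \<circ> C \<circ> iv S \<in> BX"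
  proof -
    have "C \<in> BX" using C comm_BX by (rule subsetD[rotated])
    then show ?thesis using BX_comp[OF BX_comp[OF grp_mem(1)[OF G]] grp_mem(2)[OF G]] by simp
  qed
  fix T x assume T: "T \<in> \<A>"
  define T' where "T' = iv S \<circ> T \<circ> iv (iv S)"
  have T'A: "T' \<in> \<A>" unfolding T'_def using col_conj[OF r col_inv[OF S] T] .
  have T'e: "T' y = iv S (T (S y))" for y unfolding T'_def using grp_ivv[OF G] by simp
  have Tx: "T x = S (T' (iv S x))" by (simp add: T'e grp_invs2[OF G])
  have "(S \<circ> C \<circ> iv S) (T x) = S (C (T' (iv S x)))" by (simp add: Tx grp_invs1[OF G])
  also have "\<dots> = S (T' (C (iv S x)))" using comm_pt[OF C T'A] by simp
  also have "\<dots> = T ((S \<circ> C \<circ> iv S) x)" by (simp add: T'e grp_invs2[OF G])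
  finally show "(S \<circ> C \<circ> iv S) (T x) = T ((S \<circ> C \<circ> iv S) x)" .
qed

lemma col_comm_lat:
  assumes r: "reflexive_alg \<A>" and S: "S \<in> Col \<A>" and M: "M \<in> Lat (commutant \<A>)"
  shows "S ` M \<in> Lat (commutant \<A>)"
proof -
  have G: "S \<in> Grp BX" using S by (rule col_grp)
  have c: "closed_csubspace (S ` M)" using image_csub[OF G] M unfolding Lat_def by simp
  have "C ` (S ` M) \<subseteq> S ` M" if C: "C \<in> commutant \<A>" for C
  proof
    fix y assume "y \<in> C ` (S ` M)"
    then obtain m where m: "m \<in> M" "y = C (S m)" by auto
    have C': "iv S \<circ> C \<circ> iv (iv S) \<in> commutant \<A>" using col_conj_comm[OF r col_inv[OF S] C] .
    have "\<forall>T\<in>commutant \<A>. T ` M \<subseteq> M" using M unfolding Lat_def by simp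
    then have "(iv S \<circ> C \<circ> iv (iv S)) ` M \<subseteq> M" using C' by (rule bspec)
    then have "(iv S \<circ> C \<circ> S) ` M \<subseteq> M" by (simp only: grp_ivv[OF G])
    moreover have "iv S (C (S m)) \<in> (iv S \<circ> C \<circ> S) ` M" using m(1) by simp
    ultimately have "iv S (C (S m)) \<in> M" by (rule subsetD)
    moreover have "y = S (iv S (C (S m)))" using m(2) grp_invs2[OF G] by simp
    ultimately show "y \<in> S ` M" by blast
  qed
  then show ?thesis using c unfolding Lat_def by blast
qed

lemma col_comm:
  assumes r: "reflexive_alg \<A>" and S: "S \<in> Col \<A>"
  shows "S \<in> Col (commutant \<A>)"
  using col_grp[OF S] col_comm_lat[OF r S] col_comm_lat[OF r col_inv[OF S]]
  by (intro col_intro) auto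

lemma grpA_lat:
  assumes A: "A \<in> Grp \<A>" and M: "M \<in> Lat \<A>"
  shows "A ` M = M"
proof
  show "A ` M \<subseteq> M" using M grp_mem(1)[OF A] unfolding Lat_def by blast
  have i: "iv A ` M \<subseteq> M" using M grp_mem(2)[OF A] unfolding Lat_def by blast
  show "M \<subseteq> A ` M"
  proof
    fix m assume "m \<in> M"
    then have "iv A m \<in> M" using i by blast
    moreover have "m = A (iv A m)" using grp_invs2[OF A] by simp
    ultimately show "m \<in> A ` M" by blast
  qed
qed

lemma grpC_lat:
  assumes B: "B \<in> Grp (commutant \<A>)" and M: "M \<in> Lat \<A>"
  shows "B ` M \<in> Lat \<A>"
proof -
  have G: "B \<in> Grp BX" using B Grp_mono[OF comm_BX] by blast
  have c: "closed_csubspace (B ` M)" using image_csub[OF G] M unfolding Lat_def by simp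
  have "T ` (B ` M) \<subseteq> B ` M" if T: "T \<in> \<A>" for T
  proof
    fix y assume "y \<in> T ` (B ` M)"
    then obtain m where m: "m \<in> M" "y = T (B m)" by auto
    have "T m \<in> M" using M T m(1) unfolding Lat_def by blast
    moreover have "y = B (T m)" using m(2) comm_pt[OF grp_mem(1)[OF B] T] by simp
    ultimately show "y \<in> B ` M" by blast
  qed
  then show ?thesis using c unfolding Lat_def by blast
qed

lemma prod_col:
  assumes sub: "\<A> \<subseteq> BX" and A: "A \<in> Grp \<A>" and B: "B \<in> Grp (commutant \<A>)"
  shows "A \<circ> B \<in> Col \<A>"
proof (rule col_intro)
  have GA: "A \<in> Grp BX" using A Grp_mono[OF sub] by blast
  have GB: "B \<in> Grp BX" using B Grp_mono[OF comm_BX] by blast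
  show "A \<circ> B \<in> Grp BX" using Grp_BX_comp[OF GA GB] .
  fix M assume M: "M \<in> Lat \<A>"
  have BM: "B ` M \<in> Lat \<A>" using grpC_lat[OF B M] .
  have "(A \<circ> B) ` M = A ` (B ` M)" by (rule image_comp[symmetric])
  then have 1: "(A \<circ> B) ` M \<in> Lat \<A>" using grpA_lat[OF A BM] BM by simp
  have e: "iv (A \<circ> B) = iv B \<circ> iv A" using o_inv_distrib grp_bij[OF GA] grp_bij[OF GB] by blast
  have "iv A ` M = M" using grpA_lat[OF Grp_inv[OF A] M] .
  moreover have "iv (A \<circ> B) ` M = iv B ` (iv A ` M)" unfolding e by (rule image_comp[symmetric])
  ultimately have 2: "iv (A \<circ> B) ` M \<in> Lat \<A>" using grpC_lat[OF Grp_inv[OF B] M] by simp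
  show "(A \<circ> B) ` M \<in> Lat \<A> \<and> iv (A \<circ> B) ` M \<in> Lat \<A>" using 1 2 by simp
qed

lemma col_comp:
  assumes S: "S \<in> Col T" and R: "R \<in> Col T"
  shows "S \<circ> R \<in> Col T"
proof (rule col_intro)
  have GS: "S \<in> Grp BX" using S by (rule col_grp)
  have GR: "R \<in> Grp BX" using R by (rule col_grp)
  show "S \<circ> R \<in> Grp BX" using Grp_BX_comp[OF GS GR] .
  fix M assume M: "M \<in> Lat T"
  have "(S \<circ> R) ` M = S ` (R ` M)" by (rule image_comp[symmetric])
  then have 1: "(S \<circ> R) ` M \<in> Lat T" using col_lat[OF S col_lat[OF R M]] by simp
  have e: "iv (S \<circ> R) = iv R \<circ> iv S" using o_inv_distrib grp_bij[OF GS] grp_bij[OF GR] by blast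
  have "iv (S \<circ> R) ` M = iv R ` (iv S ` M)" unfolding e by (rule image_comp[symmetric])
  then have 2: "iv (S \<circ> R) ` M \<in> Lat T" using col_lat[OF col_inv[OF R] col_lat[OF col_inv[OF S] M]] by simp
  show "(S \<circ> R) ` M \<in> Lat T \<and> iv (S \<circ> R) ` M \<in> Lat T" using 1 2 by simp
qed

lemma col_id: "id \<in> Col T"
proof (rule col_intro)
  show "id \<in> Grp BX" by (rule Grp_id) (simp add: BX_def bcl_id)
  fix M assume "M \<in> Lat T"
  then show "id ` M \<in> Lat T \<and> iv id ` M \<in> Lat T" by (simp add: inv_id)
qed

lemma col_group: "group (Col_group T)"
proof (rule groupI)
  fix x y assume "x \<in> carrier (Col_group T)" "y \<in> carrier (Col_group T)"
  then show "x \<otimes>\<^bsub>Col_group T\<^esub> y \<in> carrier (Col_group T)"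
    unfolding Col_group_def by (simp add: col_comp)
next
  show "\<one>\<^bsub>Col_group T\<^esub> \<in> carrier (Col_group T)" unfolding Col_group_def by (simp add: col_id)
next
  fix x y z
  show "x \<otimes>\<^bsub>Col_group T\<^esub> y \<otimes>\<^bsub>Col_group T\<^esub> z = x \<otimes>\<^bsub>Col_group T\<^esub> (y \<otimes>\<^bsub>Col_group T\<^esub> z)"
    unfolding Col_group_def by (simp add: o_assoc)
next
  fix x show "\<one>\<^bsub>Col_group T\<^esub> \<otimes>\<^bsub>Col_group T\<^esub> x = x" unfolding Col_group_def by simp
next
  fix x assume x: "x \<in> carrier (Col_group T)"
  then have xc: "x \<in> Col T" unfolding Col_group_def by simp
  have "iv x \<circ> x = id" using grp_bij[OF col_grp[OF xc]] by (simp add: bij_is_inj)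
  then show "\<exists>y\<in>carrier (Col_group T). y \<otimes>\<^bsub>Col_group T\<^esub> x = \<one>\<^bsub>Col_group T\<^esub>"
    using col_inv[OF xc] unfolding Col_group_def by auto
qed

lemma col_minv:
  assumes x: "x \<in> Col T" shows "m_inv (Col_group T) x = iv x"
proof (rule group.inv_equality[OF col_group])
  show "iv x \<otimes>\<^bsub>Col_group T\<^esub> x = \<one>\<^bsub>Col_group T\<^esub>"
    using grp_bij[OF col_grp[OF x]] unfolding Col_group_def by (simp add: bij_is_inj)
  show "x \<in> carrier (Col_group T)" using x unfolding Col_group_def by simp
  show "iv x \<in> carrier (Col_group T)" using col_inv[OF x] unfolding Col_group_def by simp
qed

lemma Grp_conj:
  assumes S: "S \<in> Grp BX" and X: "X \<in> Grp C" and cl: "\<And>Y. Y \<in> C \<Longrightarrow> S \<circ> Y \<circ> iv S \<in> C"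
  shows "S \<circ> X \<circ> iv S \<in> Grp C"
proof -
  have bS: "bij S" "bij (iv S)" "bij X" using grp_bij[OF S] grp_bij[OF Grp_inv[OF S]] grp_bij[OF X] by auto
  have "iv (S \<circ> X \<circ> iv S) = iv (iv S) \<circ> iv (S \<circ> X)" using o_inv_distrib bS bij_comp by blast
  also have "\<dots> = S \<circ> (iv X \<circ> iv S)" using o_inv_distrib[OF bS(1) bS(3)] grp_ivv[OF S] by simp
  finally have e: "iv (S \<circ> X \<circ> iv S) = S \<circ> iv X \<circ> iv S" by (simp add: o_assoc)
  show ?thesis unfolding Grp_def mem_Collect_eq e
    using cl[OF grp_mem(1)[OF X]] cl[OF grp_mem(2)[OF X]] bS by (simp add: bij_comp)
qed

lemma gp_intro: "A \<in> Grp \<A> \<Longrightarrow> B \<in> Grp (commutant \<A>) \<Longrightarrow> A \<circ> B \<in> GrpProd \<A>"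
  unfolding GrpProd_def by blast

lemma gp_elim: "X \<in> GrpProd \<A> \<Longrightarrow> \<exists>A B. X = A \<circ> B \<and> A \<in> Grp \<A> \<and> B \<in> Grp (commutant \<A>)"
  unfolding GrpProd_def by simp

theorem theorem3p10:
  fixes \<A> :: "('a::complex_banach \<Rightarrow> 'a) set"
  assumes "subalgebra \<A>" and "reflexive_alg \<A>"
  shows "GrpProd \<A> \<subseteq> Col \<A> \<and> Col \<A> \<subseteq> Col (commutant \<A>)
    \<and> (reflexive_alg (commutant \<A>) \<longrightarrow> normal (GrpProd \<A>) (Col_group \<A>))"
proof -
  note sa = assms(1) and r = assms(2)
  have sub: "\<A> \<subseteq> BX" using refl_BX[OF r] .
  have P1: "GrpProd \<A> \<subseteq> Col \<A>"
  proof
    fix X assume "X \<in> GrpProd \<A>"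
    then obtain A B where "X = A \<circ> B" "A \<in> Grp \<A>" "B \<in> Grp (commutant \<A>)"
      using gp_elim by blast
    then show "X \<in> Col \<A>" using prod_col[OF sub] by simp
  qed
  have P2: "Col \<A> \<subseteq> Col (commutant \<A>)" using col_comm[OF r] by blast
  have idA: "id \<in> Grp \<A>" by (rule Grp_id[OF refl_id[OF r]])
  have idC: "id \<in> Grp (commutant \<A>)"
    by (rule Grp_id, rule comm_intro) (simp_all add: BX_def bcl_id)
  have gp_inv: "iv X \<in> GrpProd \<A>" if X: "X \<in> GrpProd \<A>" for X
  proof -
    obtain A B where AB: "X = A \<circ> B" "A \<in> Grp \<A>" "B \<in> Grp (commutant \<A>)"
      using gp_elim[OF X] by blast
    have GA: "A \<in> Grp BX" using AB(2) Grp_mono[OF sub] by blast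
    have GB: "B \<in> Grp BX" using AB(3) Grp_mono[OF comm_BX] by blast
    have "iv X = iv B \<circ> iv A" using o_inv_distrib grp_bij[OF GA] grp_bij[OF GB] AB(1) by blast
    also have "\<dots> = iv A \<circ> iv B" using comm_eq[OF grp_mem(2)[OF AB(3)] grp_mem(2)[OF AB(2)]] .
    finally show ?thesis using gp_intro[OF Grp_inv[OF AB(2)] Grp_inv[OF AB(3)]] by simp
  qed
  have gp_mult: "X \<circ> Y \<in> GrpProd \<A>" if X: "X \<in> GrpProd \<A>" and Y: "Y \<in> GrpProd \<A>" for X Y
  proof -
    obtain A B where AB: "X = A \<circ> B" "A \<in> Grp \<A>" "B \<in> Grp (commutant \<A>)"
      using gp_elim[OF X] by blast
    obtain A2 B2 where AB2: "Y = A2 \<circ> B2" "A2 \<in> Grp \<A>" "B2 \<in> Grp (commutant \<A>)"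
      using gp_elim[OF Y] by blast
    have "X \<circ> Y = (A \<circ> A2) \<circ> (B \<circ> B2)"
      using comm_pt[OF grp_mem(1)[OF AB(3)] grp_mem(1)[OF AB2(2)]] AB(1) AB2(1)
      by (simp add: fun_eq_iff)
    moreover have "A \<circ> A2 \<in> Grp \<A>" by (rule Grp_comp[OF _ AB(2) AB2(2)]) (rule sub_comp[OF sa])
    moreover have "B \<circ> B2 \<in> Grp (commutant \<A>)" by (rule Grp_comp[OF _ AB(3) AB2(3)]) (rule comm_comp)
    ultimately show ?thesis using gp_intro by simp
  qed
  have P3: "normal (GrpProd \<A>) (Col_group \<A>)"
  proof (rule group.normal_invI[OF col_group])
    show "subgroup (GrpProd \<A>) (Col_group \<A>)"
    proof (rule group.subgroupI[OF col_group])
      show "GrpProd \<A> \<subseteq> carrier (Col_group \<A>)" using P1 unfolding Col_group_def by simp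
      have "id \<circ> id \<in> GrpProd \<A>" using gp_intro[OF idA idC] .
      then show "GrpProd \<A> \<noteq> {}" by blast
    next
      fix a assume a: "a \<in> GrpProd \<A>"
      have "a \<in> Col \<A>" using a P1 by (rule subsetD[rotated])
      then have "m_inv (Col_group \<A>) a = iv a" by (rule col_minv)
      then show "m_inv (Col_group \<A>) a \<in> GrpProd \<A>" using gp_inv[OF a] by simp
    next
      fix a b assume "a \<in> GrpProd \<A>" "b \<in> GrpProd \<A>"
      then show "a \<otimes>\<^bsub>Col_group \<A>\<^esub> b \<in> GrpProd \<A>" using gp_mult unfolding Col_group_def by simp
    qed
  next
    fix x h assume x: "x \<in> carrier (Col_group \<A>)" and h: "h \<in> GrpProd \<A>"
    have xc: "x \<in> Col \<A>" using x unfolding Col_group_def by simp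
    have G: "x \<in> Grp BX" using xc by (rule col_grp)
    obtain A B where AB: "h = A \<circ> B" "A \<in> Grp \<A>" "B \<in> Grp (commutant \<A>)"
      using gp_elim[OF h] by blast
    have e: "x \<otimes>\<^bsub>Col_group \<A>\<^esub> h \<otimes>\<^bsub>Col_group \<A>\<^esub> m_inv (Col_group \<A>) x
      = (x \<circ> A \<circ> iv x) \<circ> (x \<circ> B \<circ> iv x)"
      using col_minv[OF xc] AB(1) grp_invs1[OF G] unfolding Col_group_def by (simp add: fun_eq_iff)
    have 1: "x \<circ> A \<circ> iv x \<in> Grp \<A>" by (rule Grp_conj[OF G AB(2)]) (rule col_conj[OF r xc])
    have 2: "x \<circ> B \<circ> iv x \<in> Grp (commutant \<A>)" by (rule Grp_conj[OF G AB(3)]) (rule col_conj_comm[OF r xc])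
    show "x \<otimes>\<^bsub>Col_group \<A>\<^esub> h \<otimes>\<^bsub>Col_group \<A>\<^esub> m_inv (Col_group \<A>) x \<in> GrpProd \<A>"
      unfolding e by (rule gp_intro[OF 1 2])
  qed
  show ?thesis using P1 P2 P3 by blast
qed

end
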